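(* Let $\Delta$ be a simplicial complex on $[n]$ with $I_\Delta\neq 0$, let $k$ be the initial degree of $I_\Delta$, and let $d=(d_1,\dots,d_n)$ with $d_i\ge 2$ for $1\le i\le n$. Then the initial degree of $I_{M(\Delta,d)}$ is $2^{k-1}$.
   Context: A simplicial complex on $[n]$ is a nonempty family of subsets of $[n]$ closed under subsets (not every singleton need be a face); facets are inclusion-maximal faces. $I_\Delta=(\prod_{i\in\sigma}x_i:\sigma\subseteq[n],\sigma\notin\Delta)\subset K[x_1,\dots,x_n]$ is the Stanley–Reisner ideal. The initial degree of a nonzero homogeneous ideal is the smallest degree of a minimal generator. Hierarchical model: $M(\Delta,d)$ is the $0/1$ matrix with columns indexed by cells $c\in\mathcal C=[d_1]\times\cdots\times[d_n]$ and rows indexed by pairs $(F,a)$, $F$ a facet, $a\in\prod_{i\in F}[d_i]$, entry $1$ iff $c|_F=a$. Its toric ideal $I_{M(\Delta,d)}\subset K[p_c:c\in\mathcal C]$ is generated by binomials $p^u-p^v$, $u,v\in\mathbb N^{\mathcal C}$, $Mu=Mv$, and is homogeneous. *)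

theory Defs
  imports Main "HOL-Library.FuncSet" "HOL-Library.Poly_Mapping"
begin

type_synonym ('v, 'k) mpoly = "('v \<Rightarrow>\<^sub>0 nat) \<Rightarrow>\<^sub>0 'k"

definition poly_ring :: "'v set \<Rightarrow> ('v, 'k::zero) mpoly set" where
  "poly_ring V = {p :: ('v, 'k) mpoly. \<forall>m\<in>Poly_Mapping.keys p. Poly_Mapping.keys m \<subseteq> V}"

inductive_set ideal_gen :: "'v set \<Rightarrow> ('v, 'k::comm_ring_1) mpoly set \<Rightarrow> ('v, 'k) mpoly set"
  for V G where
  zero: "0 \<in> ideal_gen V G"
| step: "g \<in> G \<Longrightarrow> r \<in> poly_ring V \<Longrightarrow> f \<in> ideal_gen V G \<Longrightarrow> f + r * g \<in> ideal_gen V G"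

definition monom_deg :: "('v \<Rightarrow>\<^sub>0 nat) \<Rightarrow> nat" where
  "monom_deg m = (\<Sum>v\<in>Poly_Mapping.keys m. Poly_Mapping.lookup m v)"

definition homogeneous_of_deg :: "('v, 'k::zero) mpoly \<Rightarrow> nat \<Rightarrow> bool" where
  "homogeneous_of_deg f k = (\<forall>m\<in>Poly_Mapping.keys f. monom_deg m = k)"

text \<open>Initial degree of a (nonzero homogeneous) ideal: the least degree in which it contains
  a nonzero homogeneous element; this equals the smallest degree of a minimal generator.\<close>
definition initial_degree :: "('v, 'k::zero) mpoly set \<Rightarrow> nat" where
  "initial_degree I = (LEAST k. \<exists>f\<in>I. f \<noteq> 0 \<and> homogeneous_of_deg f k)"

definition simplicial_complex :: "nat \<Rightarrow> nat set set \<Rightarrow> bool" where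
  "simplicial_complex n \<Delta> \<longleftrightarrow> \<Delta> \<noteq> {} \<and> (\<forall>\<sigma>\<in>\<Delta>. \<sigma> \<subseteq> {1..n}) \<and> (\<forall>\<sigma>\<in>\<Delta>. \<forall>\<tau>. \<tau> \<subseteq> \<sigma> \<longrightarrow> \<tau> \<in> \<Delta>)"

definition facets :: "nat set set \<Rightarrow> nat set set" where
  "facets \<Delta> = {F\<in>\<Delta>. \<forall>G\<in>\<Delta>. F \<subseteq> G \<longrightarrow> G = F}"

definition sr_ideal :: "nat \<Rightarrow> nat set set \<Rightarrow> (nat, 'k::comm_ring_1) mpoly set" where
  "sr_ideal n \<Delta> = ideal_gen {1..n}
     {Poly_Mapping.single (\<Sum>i\<in>\<sigma>. Poly_Mapping.single i 1) 1 | \<sigma>. \<sigma> \<subseteq> {1..n} \<and> \<sigma> \<notin> \<Delta>}"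

definition cells :: "nat \<Rightarrow> (nat \<Rightarrow> nat) \<Rightarrow> (nat \<Rightarrow> nat) set" where
  "cells n d = PiE {1..n} (\<lambda>i. {1..d i})"

text \<open>Row (F,a) of M(Delta,d) applied to u in N^C.\<close>
definition model_row :: "nat \<Rightarrow> (nat \<Rightarrow> nat) \<Rightarrow> nat set \<Rightarrow> (nat \<Rightarrow> nat) \<Rightarrow> ((nat \<Rightarrow> nat) \<Rightarrow>\<^sub>0 nat) \<Rightarrow> nat" where
  "model_row n d F a u = (\<Sum>c\<in>{c\<in>cells n d. restrict c F = a}. Poly_Mapping.lookup u c)"

definition same_margins :: "nat \<Rightarrow> (nat \<Rightarrow> nat) \<Rightarrow> nat set set \<Rightarrow> ((nat \<Rightarrow> nat) \<Rightarrow>\<^sub>0 nat) \<Rightarrow> ((nat \<Rightarrow> nat) \<Rightarrow>\<^sub>0 nat) \<Rightarrow> bool" where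
  "same_margins n d \<Delta> u v \<longleftrightarrow>
     (\<forall>F\<in>facets \<Delta>. \<forall>a\<in>PiE F (\<lambda>i. {1..d i}). model_row n d F a u = model_row n d F a v)"

definition hier_ideal :: "nat \<Rightarrow> (nat \<Rightarrow> nat) \<Rightarrow> nat set set \<Rightarrow> (nat \<Rightarrow> nat, 'k::comm_ring_1) mpoly set" where
  "hier_ideal n d \<Delta> = ideal_gen (cells n d)
     {Poly_Mapping.single u 1 - Poly_Mapping.single v 1 | u v.
        Poly_Mapping.keys u \<subseteq> cells n d \<and> Poly_Mapping.keys v \<subseteq> cells n d \<and> same_margins n d \<Delta> u v}"

end

theory Submission
  imports Defs
begin

lemma sum_PiE_insert:
  assumes "x \<notin> F" "finite F" "\<forall>i\<in>insert x F. finite (D i)"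
  shows "(\<Sum>c\<in>PiE (insert x F) D. h c) = (\<Sum>y\<in>D x. \<Sum>c\<in>PiE F D. h (c(x:=y)))"
proof -
  have "(\<Sum>c\<in>PiE (insert x F) D. h c) = (\<Sum>p\<in>D x \<times> PiE F D. h ((\<lambda>(y, g). g(x := y)) p))"
    unfolding PiE_insert_eq by (rule sum.reindex[unfolded comp_def]) (rule inj_combinator[OF assms(1)])
  also have "\<dots> = (\<Sum>y\<in>D x. \<Sum>c\<in>PiE F D. h (c(x:=y)))"
    using sum.cartesian_product[of "\<lambda>y c. h (c(x:=y))" "PiE F D" "D x"] by (simp add: case_prod_unfold)
  finally show ?thesis .
qed

lemma restrict_upd_eq:
  assumes "x \<notin> S" "t \<in> PiE S D"
  shows "(restrict (c(x:=y')) (insert x S) = t(x:=y)) \<longleftrightarrow> (y' = y \<and> restrict c S = t)"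
proof
  assume h: "restrict (c(x:=y')) (insert x S) = t(x:=y)"
  have "y' = y" using fun_cong[OF h, of x] by simp
  moreover have "restrict c S = t"
  proof
    fix i show "restrict c S i = t i"
      using fun_cong[OF h, of i] assms by (cases "i = x") (auto simp: PiE_def extensional_def)
  qed
  ultimately show "y' = y \<and> restrict c S = t" ..
next
  assume h: "y' = y \<and> restrict c S = t"
  show "restrict (c(x:=y')) (insert x S) = t(x:=y)"
  proof
    fix i show "restrict (c(x:=y')) (insert x S) i = (t(x:=y)) i"
      using h fun_cong[of "restrict c S" t i] assms by (auto simp: PiE_def extensional_def)
  qed
qed

lemma core:
  fixes w :: "('a \<Rightarrow> 'b) \<Rightarrow> int" and D :: "'a \<Rightarrow> 'b set"
  assumes "finite I" "\<forall>i\<in>I. finite (D i)"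
    and "\<forall>S t. S \<subseteq> I \<longrightarrow> card S < k \<longrightarrow> t \<in> PiE S D \<longrightarrow> (\<Sum>c\<in>{c\<in>PiE I D. restrict c S = t}. w c) = 0"
    and "c0 \<in> PiE I D" "w c0 \<noteq> 0"
  shows "2^k \<le> (\<Sum>c\<in>PiE I D. \<bar>w c\<bar>)"
  using assms
proof (induction I arbitrary: k w c0 rule: finite_induct)
  case empty
  then have c0: "c0 = (\<lambda>x. undefined)" by simp
  show ?case
  proof (cases k)
    case 0 then show ?thesis using empty c0 by simp
  next
    case (Suc k')
    have "(\<Sum>c\<in>{c\<in>PiE {} D. restrict c {} = c0}. w c) = 0"
      using empty.prems(2)[rule_format, of "{}" c0] Suc empty.prems(3) by simp
    moreover have "{c\<in>PiE {} D. restrict c {} = c0} = {c0}" using c0 by (auto simp: restrict_def)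
    ultimately show ?thesis using c0 empty.prems(4) by simp
  qed
next
  case (insert x F)
  have finF: "finite (PiE F D)" using insert by (auto intro!: finite_PiE)
  have finDx: "finite (D x)" using insert by auto
  define ws where "ws y c = w (c(x:=y))" for y c
  have total: "(\<Sum>c\<in>PiE (insert x F) D. \<bar>w c\<bar>) = (\<Sum>y\<in>D x. \<Sum>c\<in>PiE F D. \<bar>ws y c\<bar>)"
    unfolding ws_def by (rule sum_PiE_insert) (use insert in auto)
  define y0 where "y0 = c0 x"
  define c0' where "c0' = c0(x:=undefined)"
  have y0: "y0 \<in> D x" using insert.prems(3) by (auto simp: y0_def)
  have c0': "c0' \<in> PiE F D" using insert.prems(3) insert.hyps(2)
    by (auto simp: c0'_def PiE_def extensional_def)
  have wsc0: "ws y0 c0' \<noteq> 0" using insert.prems(4) by (simp add: ws_def y0_def c0'_def)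
  have nonneg: "\<And>y. 0 \<le> (\<Sum>c\<in>PiE F D. \<bar>ws y c\<bar>)" by (simp add: sum_nonneg)
  show ?case
  proof (cases k)
    case 0
    have "\<bar>w c0\<bar> \<le> (\<Sum>c\<in>PiE (insert x F) D. \<bar>w c\<bar>)"
      by (rule member_le_sum) (use insert finF in \<open>auto intro!: finite_PiE\<close>)
    then show ?thesis using 0 insert.prems(4) by simp
  next
    case (Suc k')
    have slice: "(\<Sum>c\<in>{c\<in>PiE F D. restrict c S = t}. ws y c) = 0"
      if y: "y \<in> D x" and S: "S \<subseteq> F" "card S < k'" and t: "t \<in> PiE S D" for y S t
    proof -
      have xS: "x \<notin> S" using S insert.hyps by auto
      have finS: "finite S" using S insert.hyps finite_subset by auto
      have "(\<Sum>c\<in>{c\<in>PiE (insert x F) D. restrict c (insert x S) = t(x:=y)}. w c) = 0"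
        using insert.prems(2)[rule_format, of "insert x S" "t(x:=y)"] S Suc xS finS y t
        by (auto simp: PiE_def extensional_def)
      also have "(\<Sum>c\<in>{c\<in>PiE (insert x F) D. restrict c (insert x S) = t(x:=y)}. w c)
          = (\<Sum>c\<in>PiE (insert x F) D. if restrict c (insert x S) = t(x:=y) then w c else 0)"
        by (rule sum.inter_filter) (use insert in \<open>auto intro!: finite_PiE\<close>)
      also have "\<dots> = (\<Sum>y'\<in>D x. \<Sum>c\<in>PiE F D. if restrict (c(x:=y')) (insert x S) = t(x:=y) then w (c(x:=y')) else 0)"
        by (rule sum_PiE_insert) (use insert in auto)
      also have "\<dots> = (\<Sum>y'\<in>D x. \<Sum>c\<in>PiE F D. if y' = y then (if restrict c S = t then ws y c else 0) else 0)"
        using restrict_upd_eq[OF xS t] by (intro sum.cong refl) (auto simp: ws_def)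
      also have "\<dots> = (\<Sum>c\<in>PiE F D. if restrict c S = t then ws y c else 0)"
        by (subst sum.swap) (simp add: sum.delta' y finDx)
      also have "\<dots> = (\<Sum>c\<in>{c\<in>PiE F D. restrict c S = t}. ws y c)"
        by (rule sum.inter_filter[symmetric]) (rule finF)
      finally show ?thesis by simp
    qed
    define W where "W c = (\<Sum>y\<in>D x. ws y c)" for c
    have Wm: "(\<Sum>c\<in>{c\<in>PiE F D. restrict c S = t}. W c) = 0"
      if S: "S \<subseteq> F" "card S < k" and t: "t \<in> PiE S D" for S t
    proof -
      have xS: "x \<notin> S" using S insert.hyps by auto
      have "(\<Sum>c\<in>{c\<in>PiE (insert x F) D. restrict c S = t}. w c) = 0"
        using insert.prems(2)[rule_format, of S t] S t by auto
      also have "(\<Sum>c\<in>{c\<in>PiE (insert x F) D. restrict c S = t}. w c)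
          = (\<Sum>c\<in>PiE (insert x F) D. if restrict c S = t then w c else 0)"
        by (rule sum.inter_filter) (use insert in \<open>auto intro!: finite_PiE\<close>)
      also have "\<dots> = (\<Sum>y'\<in>D x. \<Sum>c\<in>PiE F D. if restrict (c(x:=y')) S = t then w (c(x:=y')) else 0)"
        by (rule sum_PiE_insert) (use insert in auto)
      also have "\<dots> = (\<Sum>y'\<in>D x. \<Sum>c\<in>PiE F D. if restrict c S = t then ws y' c else 0)"
      proof (intro sum.cong refl)
        fix y' and c :: "'a \<Rightarrow> 'b"
        have "restrict (c(x:=y')) S = restrict c S" using xS by (auto simp: restrict_def)
        then show "(if restrict (c(x:=y')) S = t then w (c(x:=y')) else 0) = (if restrict c S = t then ws y' c else 0)"
          by (simp add: ws_def)
      qed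
      also have "\<dots> = (\<Sum>c\<in>PiE F D. if restrict c S = t then W c else 0)"
        unfolding W_def by (subst sum.swap) (intro sum.cong refl, simp)
      also have "\<dots> = (\<Sum>c\<in>{c\<in>PiE F D. restrict c S = t}. W c)"
        by (rule sum.inter_filter[symmetric]) (rule finF)
      finally show ?thesis by simp
    qed
    show ?thesis
    proof (cases "\<exists>y1\<in>D x. y1 \<noteq> y0 \<and> (\<exists>c\<in>PiE F D. ws y1 c \<noteq> 0)")
      case True
      then obtain y1 c1 where y1: "y1 \<in> D x" "y1 \<noteq> y0" "c1 \<in> PiE F D" "ws y1 c1 \<noteq> 0" by blast
      have b0: "2^k' \<le> (\<Sum>c\<in>PiE F D. \<bar>ws y0 c\<bar>)"
        using insert.IH[of k' "ws y0" c0'] insert.prems(1) slice[OF y0] c0' wsc0 by blast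
      have b1: "2^k' \<le> (\<Sum>c\<in>PiE F D. \<bar>ws y1 c\<bar>)"
        using insert.IH[of k' "ws y1" c1] insert.prems(1) slice[OF y1(1)] y1 by blast
      have "(\<Sum>y\<in>{y0,y1}. \<Sum>c\<in>PiE F D. \<bar>ws y c\<bar>) \<le> (\<Sum>y\<in>D x. \<Sum>c\<in>PiE F D. \<bar>ws y c\<bar>)"
        by (rule sum_mono2) (use finDx y0 y1 nonneg in auto)
      then show ?thesis using b0 b1 y1(2) Suc total by simp
    next
      case False
      have WW: "W c = ws y0 c" if "c \<in> PiE F D" for c
      proof -
        have "W c = ws y0 c + (\<Sum>y\<in>D x - {y0}. ws y c)"
          unfolding W_def using finDx y0 by (simp add: sum.remove)
        also have "(\<Sum>y\<in>D x - {y0}. ws y c) = 0"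
          using False that by (intro sum.neutral) auto
        finally show ?thesis by simp
      qed
      have "2^k \<le> (\<Sum>c\<in>PiE F D. \<bar>W c\<bar>)"
      proof -
        have "W c0' \<noteq> 0" using WW[OF c0'] wsc0 by simp
        then show ?thesis using insert.IH[of k W c0'] insert.prems(1) Wm c0' by blast
      qed
      also have "\<dots> = (\<Sum>c\<in>PiE F D. \<bar>ws y0 c\<bar>)" using WW by (intro sum.cong) auto
      also have "\<dots> \<le> (\<Sum>y\<in>D x. \<Sum>c\<in>PiE F D. \<bar>ws y c\<bar>)"
        by (rule member_le_sum[of y0 "D x" "\<lambda>y. \<Sum>c\<in>PiE F D. \<bar>ws y c\<bar>"]) (use y0 nonneg finDx in auto)
      finally show ?thesis using total by simp
    qed
  qed
qed


lemma monom_deg_eq: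
  assumes "finite A" "Poly_Mapping.keys m \<subseteq> A"
  shows "monom_deg m = sum (Poly_Mapping.lookup m) A"
  unfolding monom_deg_def
  by (rule sum.mono_neutral_left) (use assms in \<open>auto simp: in_keys_iff\<close>)

lemma monom_deg_add: "monom_deg (a + b) = monom_deg a + monom_deg b"
proof -
  let ?A = "Poly_Mapping.keys a \<union> Poly_Mapping.keys b"
  have "monom_deg (a + b) = sum (Poly_Mapping.lookup (a+b)) ?A"
    by (rule monom_deg_eq) (use keys_add[of a b] in auto)
  also have "\<dots> = sum (Poly_Mapping.lookup a) ?A + sum (Poly_Mapping.lookup b) ?A"
    by (simp add: lookup_add sum.distrib)
  also have "\<dots> = monom_deg a + monom_deg b"
    using monom_deg_eq[of ?A a] monom_deg_eq[of ?A b] by simp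
  finally show ?thesis .
qed

lemma ideal_lower:
  assumes G: "\<forall>g\<in>G. \<forall>m\<in>Poly_Mapping.keys g. B \<le> monom_deg m"
    and f: "f \<in> ideal_gen V G"
  shows "\<forall>m\<in>Poly_Mapping.keys f. B \<le> monom_deg m"
  using f
proof (induction rule: ideal_gen.induct)
  case zero then show ?case by simp
next
  case (step g r f)
  show ?case
  proof
    fix m assume m: "m \<in> Poly_Mapping.keys (f + r * g)"
    then have "m \<in> Poly_Mapping.keys f \<or> m \<in> Poly_Mapping.keys (r * g)"
      using keys_add[of f "r * g"] by blast
    then show "B \<le> monom_deg m"
    proof
      assume "m \<in> Poly_Mapping.keys f" then show ?thesis using step.IH by blast
    next
      assume "m \<in> Poly_Mapping.keys (r * g)"
      then have "m \<in> {a + b | a b. a \<in> Poly_Mapping.keys r \<and> b \<in> Poly_Mapping.keys g}"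
        using keys_mult[of r g] by (rule subsetD[rotated])
      then obtain a b where ab: "m = a + b" "b \<in> Poly_Mapping.keys g" by blast
      have "B \<le> monom_deg b" using G step.hyps(1) ab(2) by blast
      then show ?thesis unfolding ab(1) monom_deg_add by simp
    qed
  qed
qed

lemma ideal_gen_empty: "f \<in> ideal_gen V {} \<Longrightarrow> f = 0"
  by (induction rule: ideal_gen.induct) auto

lemma gen_in_ideal:
  fixes g :: "('v, 'k::comm_ring_1) mpoly"
  shows "g \<in> G \<Longrightarrow> g \<in> ideal_gen V G"
  using ideal_gen.step[OF _ _ ideal_gen.zero, of g G 1 V]
  by (simp add: poly_ring_def)

lemma initdeg_eq:
  assumes "f0 \<in> I" "f0 \<noteq> 0" "homogeneous_of_deg f0 B"
    and "\<forall>f\<in>I. \<forall>m\<in>Poly_Mapping.keys f. B \<le> monom_deg m"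
  shows "initial_degree I = B"
  unfolding initial_degree_def
proof (rule Least_equality)
  show "\<exists>f\<in>I. f \<noteq> 0 \<and> homogeneous_of_deg f B" using assms by blast
next
  fix y assume "\<exists>f\<in>I. f \<noteq> 0 \<and> homogeneous_of_deg f y"
  then obtain f where f: "f \<in> I" "f \<noteq> 0" "homogeneous_of_deg f y" by blast
  then obtain m where "m \<in> Poly_Mapping.keys f" using keys_eq_empty by blast
  then show "B \<le> y" using f assms(4) by (auto simp: homogeneous_of_deg_def)
qed


lemma facet_above:
  assumes sc: "simplicial_complex n \<Delta>" and S: "S \<in> \<Delta>"
  shows "\<exists>F\<in>facets \<Delta>. S \<subseteq> F"
proof -
  have "\<Delta> \<subseteq> Pow {1..n}" using sc unfolding simplicial_complex_def by blast
  then have fin: "finite \<Delta>" by (rule finite_subset) simp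
  let ?A = "{G\<in>\<Delta>. S \<subseteq> G}"
  have "finite ?A" using fin by simp
  moreover have "?A \<noteq> {}" using S by blast
  ultimately obtain m where m: "m \<in> ?A" "\<forall>b\<in>?A. m \<le> b \<longrightarrow> m = b"
    using finite_has_maximal[of ?A] by blast
  then have "m \<in> facets \<Delta>" unfolding facets_def by auto
  then show ?thesis using m by blast
qed

lemma lower_comb:
  assumes sc: "simplicial_complex n \<Delta>"
    and faces: "\<forall>S. S \<subseteq> {1..n} \<longrightarrow> card S < s \<longrightarrow> S \<in> \<Delta>"
    and s1: "1 \<le> s"
    and ka: "Poly_Mapping.keys a \<subseteq> cells n d" and kb: "Poly_Mapping.keys b \<subseteq> cells n d"
    and sm: "same_margins n d \<Delta> a b" and ab: "a \<noteq> b"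
  shows "2^(s-1) \<le> monom_deg a"
proof -
  define D where "D = (\<lambda>i. {1..d i})"
  have cellsD: "cells n d = PiE {1..n} D" by (simp add: cells_def D_def)
  have fincells: "finite (cells n d)" unfolding cellsD D_def by (auto intro!: finite_PiE)
  define w where "w c = int (Poly_Mapping.lookup a c) - int (Poly_Mapping.lookup b c)" for c
  have facetm: "(\<Sum>c\<in>{c\<in>cells n d. restrict c F = \<alpha>}. w c) = 0"
    if F: "F \<in> facets \<Delta>" and \<alpha>: "\<alpha> \<in> PiE F D" for F \<alpha>
  proof -
    have "model_row n d F \<alpha> a = model_row n d F \<alpha> b"
      using sm F \<alpha> unfolding same_margins_def D_def by blast
    then have "int (model_row n d F \<alpha> a) = int (model_row n d F \<alpha> b)" by simp
    then show ?thesis unfolding model_row_def w_def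
      by (simp add: sum_subtractf)
  qed
  have marg: "(\<Sum>c\<in>{c\<in>PiE {1..n} D. restrict c S = t}. w c) = 0"
    if S: "S \<subseteq> {1..n}" "card S < s" and t: "t \<in> PiE S D" for S t
  proof -
    have "S \<in> \<Delta>" using faces S by blast
    then obtain F where F: "F \<in> facets \<Delta>" "S \<subseteq> F" using facet_above[OF sc] by blast
    have Fn: "F \<subseteq> {1..n}" using F sc unfolding facets_def simplicial_complex_def by blast
    let ?X = "{c\<in>cells n d. restrict c S = t}"
    let ?T = "{\<alpha>\<in>PiE F D. restrict \<alpha> S = t}"
    have finF: "finite F" using Fn by (rule finite_subset) simp
    have "finite (PiE F D)" by (rule finite_PiE) (simp_all add: finF D_def)
    then have finT: "finite ?T" by (rule finite_subset[rotated]) blast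
    have img: "(\<lambda>c. restrict c F) ` ?X \<subseteq> ?T"
    proof
      fix y assume "y \<in> (\<lambda>c. restrict c F) ` ?X"
      then obtain c where c: "c \<in> cells n d" "restrict c S = t" "y = restrict c F" by blast
      have "restrict c F \<in> PiE F D" using c(1) Fn unfolding cellsD by (auto simp: PiE_def Pi_def)
      moreover have "restrict (restrict c F) S = restrict c S" using F(2)
        by (auto simp: restrict_def fun_eq_iff)
      then have "restrict (restrict c F) S = t" using c(2) by simp
      ultimately show "y \<in> ?T" using c by simp
    qed
    have "(\<Sum>\<alpha>\<in>?T. \<Sum>c\<in>{c. c \<in> ?X \<and> restrict c F = \<alpha>}. w c) = (\<Sum>c\<in>?X. w c)"
      by (rule sum.group) (use fincells finT img in auto)
    moreover have "(\<Sum>c\<in>{c. c \<in> ?X \<and> restrict c F = \<alpha>}. w c) = 0" if "\<alpha> \<in> ?T" for \<alpha>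
    proof -
      have key: "restrict c S = t" if cF: "restrict c F = \<alpha>" for c
      proof -
        have "restrict (restrict c F) S = restrict c S" using F(2)
          by (auto simp: restrict_def fun_eq_iff)
        then have "restrict c S = restrict \<alpha> S" using cF by simp
        then show "restrict c S = t" using \<open>\<alpha> \<in> ?T\<close> by simp
      qed
      have "{c. c \<in> ?X \<and> restrict c F = \<alpha>} = {c\<in>cells n d. restrict c F = \<alpha>}"
        using key by blast
      then show ?thesis using facetm[OF F(1)] that by simp
    qed
    ultimately show ?thesis unfolding cellsD by simp
  qed
  have "\<exists>c. Poly_Mapping.lookup a c \<noteq> Poly_Mapping.lookup b c"
    using ab poly_mapping_eqI by metis
  then obtain c0 where c0: "Poly_Mapping.lookup a c0 \<noteq> Poly_Mapping.lookup b c0" by blast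
  have "c0 \<in> Poly_Mapping.keys a \<union> Poly_Mapping.keys b" using c0 by (auto simp: in_keys_iff)
  then have c0c: "c0 \<in> PiE {1..n} D" using ka kb cellsD by blast
  have wc0: "w c0 \<noteq> 0" using c0 by (simp add: w_def)
  have margs: "\<forall>S t. S \<subseteq> {1..n} \<longrightarrow> card S < s \<longrightarrow> t \<in> PiE S D \<longrightarrow>
      (\<Sum>c\<in>{c\<in>PiE {1..n} D. restrict c S = t}. w c) = 0"
    using marg by blast
  have finD: "\<forall>i\<in>{1..n}. finite (D i)" by (simp add: D_def)
  have big: "2^s \<le> (\<Sum>c\<in>PiE {1..n} D. \<bar>w c\<bar>)"
    by (rule core[of "{1..n}" D s w c0, OF finite_atLeastAtMost finD margs c0c wc0])
  have dega: "monom_deg a = (\<Sum>c\<in>cells n d. Poly_Mapping.lookup a c)"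
    by (rule monom_deg_eq[OF fincells ka])
  have degb: "monom_deg b = (\<Sum>c\<in>cells n d. Poly_Mapping.lookup b c)"
    by (rule monom_deg_eq[OF fincells kb])
  have "(\<Sum>c\<in>{c\<in>PiE {1..n} D. restrict c {} = (\<lambda>x. undefined)}. w c) = 0"
    using marg[of "{}" "\<lambda>x. undefined"] s1 by simp
  moreover have "{c\<in>PiE {1..n} D. restrict c {} = (\<lambda>x. undefined)} = PiE {1..n} D"
    by (simp add: restrict_def)
  ultimately have "(\<Sum>c\<in>cells n d. w c) = 0" unfolding cellsD by simp
  then have eqdeg: "int (monom_deg a) = int (monom_deg b)"
    unfolding dega degb w_def by (simp add: sum_subtractf)
  have "(\<Sum>c\<in>PiE {1..n} D. \<bar>w c\<bar>) \<le> (\<Sum>c\<in>cells n d. int (Poly_Mapping.lookup a c) + int (Poly_Mapping.lookup b c))"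
    unfolding cellsD w_def by (rule sum_mono) (simp add: abs_if)
  also have "\<dots> = int (monom_deg a) + int (monom_deg b)"
    unfolding dega degb by (simp add: sum.distrib)
  finally have "2^s \<le> 2 * int (monom_deg a)" using big eqdeg by simp
  moreover have "(2::int)^s = 2 * 2^(s-1)" using s1 by (cases s) simp_all
  ultimately show ?thesis by simp
qed


definition flip :: "'a \<Rightarrow> 'a set \<Rightarrow> 'a set" where
  "flip j T = (if j \<in> T then T - {j} else insert j T)"

lemma flip_card:
  fixes \<sigma> :: "'a set"
  assumes fin: "finite \<sigma>" and j: "j \<in> \<sigma>"
    and P: "\<And>T. T \<subseteq> \<sigma> \<Longrightarrow> P (flip j T) = P T"
  shows "card {T. T \<subseteq> \<sigma> \<and> even (card T) \<and> P T} = card {T. T \<subseteq> \<sigma> \<and> odd (card T) \<and> P T}"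
proof (rule bij_betw_same_card[of "flip j"], rule bij_betw_byWitness[where f' = "flip j"])
  have sub: "flip j T \<subseteq> \<sigma>" if "T \<subseteq> \<sigma>" for T using that j by (auto simp: flip_def)
  have inv: "flip j (flip j T) = T" for T by (auto simp: flip_def)
  have cd: "card (flip j T) = (if j \<in> T then card T - 1 else Suc (card T))" if "T \<subseteq> \<sigma>" for T
  proof -
    have "finite T" using that fin by (rule finite_subset)
    then show ?thesis by (auto simp: flip_def)
  qed
  have par: "even (card (flip j T)) \<longleftrightarrow> odd (card T)" if "T \<subseteq> \<sigma>" for T
  proof (cases "j \<in> T")
    case True
    have fT: "finite T" using that fin by (rule finite_subset)
    then have "card T \<noteq> 0" using True card_0_eq[OF fT] by blast
    then have "card T \<ge> 1" by simp
    then show ?thesis using cd[OF that] True by (cases "card T") auto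
  next
    case False then show ?thesis using cd[OF that] by simp
  qed
  show "\<forall>a\<in>{T. T \<subseteq> \<sigma> \<and> even (card T) \<and> P T}. flip j (flip j a) = a" using inv by blast
  show "\<forall>a\<in>{T. T \<subseteq> \<sigma> \<and> odd (card T) \<and> P T}. flip j (flip j a) = a" using inv by blast
  show "flip j ` {T. T \<subseteq> \<sigma> \<and> even (card T) \<and> P T} \<subseteq> {T. T \<subseteq> \<sigma> \<and> odd (card T) \<and> P T}"
  proof
    fix y assume "y \<in> flip j ` {T. T \<subseteq> \<sigma> \<and> even (card T) \<and> P T}"
    then obtain T where T: "T \<subseteq> \<sigma>" "even (card T)" "P T" "y = flip j T" by blast
    have "odd (card (flip j T))" using par[OF T(1)] T(2)
      by simp
    moreover have "P (flip j T)" using P[OF T(1)] T(3) by simp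
    ultimately show "y \<in> {T. T \<subseteq> \<sigma> \<and> odd (card T) \<and> P T}" using T(4) sub[OF T(1)] by simp
  qed
  show "flip j ` {T. T \<subseteq> \<sigma> \<and> odd (card T) \<and> P T} \<subseteq> {T. T \<subseteq> \<sigma> \<and> even (card T) \<and> P T}"
  proof
    fix y assume "y \<in> flip j ` {T. T \<subseteq> \<sigma> \<and> odd (card T) \<and> P T}"
    then obtain T where T: "T \<subseteq> \<sigma>" "odd (card T)" "P T" "y = flip j T" by blast
    have "even (card (flip j T))" using par[OF T(1)] T(2) by simp
    moreover have "P (flip j T)" using P[OF T(1)] T(3) by simp
    ultimately show "y \<in> {T. T \<subseteq> \<sigma> \<and> even (card T) \<and> P T}" using T(4) sub[OF T(1)] by simp
  qed
qed

lemma even_subsets_card: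
  fixes \<sigma> :: "'a set"
  assumes fin: "finite \<sigma>" and ne: "\<sigma> \<noteq> {}"
  shows "card {T. T \<subseteq> \<sigma> \<and> even (card T)} = 2^(card \<sigma> - 1)"
proof -
  obtain j where j: "j \<in> \<sigma>" using ne by blast
  have eq: "card {T. T \<subseteq> \<sigma> \<and> even (card T) \<and> True} = card {T. T \<subseteq> \<sigma> \<and> odd (card T) \<and> True}"
    by (rule flip_card[OF fin j]) (rule refl)
  have pw: "Pow \<sigma> = {T. T \<subseteq> \<sigma> \<and> even (card T)} \<union> {T. T \<subseteq> \<sigma> \<and> odd (card T)}" by blast
  have "(2::nat)^card \<sigma> = card (Pow \<sigma>)" using card_Pow[OF fin] by simp
  also have "\<dots> = card ({T. T \<subseteq> \<sigma> \<and> even (card T)} \<union> {T. T \<subseteq> \<sigma> \<and> odd (card T)})" using pw by (rule arg_cong)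
  also have "\<dots> = card {T. T \<subseteq> \<sigma> \<and> even (card T)} + card {T. T \<subseteq> \<sigma> \<and> odd (card T)}"
  proof (rule card_Un_disjoint)
    show "finite {T. T \<subseteq> \<sigma> \<and> even (card T)}" by (rule finite_subset[of _ "Pow \<sigma>"]) (auto simp: fin)
    show "finite {T. T \<subseteq> \<sigma> \<and> odd (card T)}" by (rule finite_subset[of _ "Pow \<sigma>"]) (auto simp: fin)
  qed blast
  finally have "2^card \<sigma> = card {T. T \<subseteq> \<sigma> \<and> even (card T)} + card {T. T \<subseteq> \<sigma> \<and> odd (card T)}" .
  moreover have c0: "card \<sigma> \<noteq> 0" using fin ne by simp
  then have "(2::nat)^card \<sigma> = 2 * 2^(card \<sigma> - 1)" by (cases "card \<sigma>") simp_all
  moreover have "card {T. T \<subseteq> \<sigma> \<and> even (card T)} = card {T. T \<subseteq> \<sigma> \<and> odd (card T)}"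
    using eq by simp
  ultimately show ?thesis by linarith
qed


lemma upper_comb:
  assumes sc: "simplicial_complex n \<Delta>" and \<sigma>n: "\<sigma> \<subseteq> {1..n}" and nf: "\<sigma> \<notin> \<Delta>"
    and ne: "\<sigma> \<noteq> {}" and dd: "\<forall>i\<in>{1..n}. 2 \<le> d i"
  shows "\<exists>u v. Poly_Mapping.keys u \<subseteq> cells n d \<and> Poly_Mapping.keys v \<subseteq> cells n d
     \<and> same_margins n d \<Delta> u v \<and> u \<noteq> v \<and> monom_deg u = 2^(card \<sigma> - 1) \<and> monom_deg v = 2^(card \<sigma> - 1)"
proof -
  have fin\<sigma>: "finite \<sigma>" using \<sigma>n finite_subset by blast
  define cellOf where "cellOf T = restrict (\<lambda>i. if i \<in> T then 2 else 1::nat) {1..n}" for T :: "nat set"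
  define Ts where "Ts p = {T. T \<subseteq> \<sigma> \<and> even (card T) = p}" for p
  define E where "E p = cellOf ` Ts p" for p
  define mon where "mon p = Abs_poly_mapping (\<lambda>c. if c \<in> E p then 1 else (0::nat))" for p
  have inj: "inj_on cellOf (Pow \<sigma>)"
  proof (rule inj_onI)
    fix A B assume A: "A \<in> Pow \<sigma>" and B: "B \<in> Pow \<sigma>" and eq: "cellOf A = cellOf B"
    show "A = B"
    proof (rule set_eqI)
      fix i show "i \<in> A \<longleftrightarrow> i \<in> B"
      proof (cases "i \<in> \<sigma>")
        case True
        then have "i \<in> {1..n}" using \<sigma>n by (rule subsetD[rotated])
        have "cellOf A i = cellOf B i" using eq by simp
        then have "(if i \<in> A then 2 else 1::nat) = (if i \<in> B then 2 else 1)"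
          using \<open>i \<in> {1..n}\<close> unfolding cellOf_def by simp
        then show ?thesis by (cases "i \<in> A"; cases "i \<in> B") simp_all
      next
        case False then show ?thesis using A B by blast
      qed
    qed
  qed
  have TsP: "Ts p \<subseteq> Pow \<sigma>" for p by (auto simp: Ts_def)
  have finTs: "finite (Ts p)" for p by (rule finite_subset[OF TsP]) (simp add: fin\<sigma>)
  have finE: "finite (E p)" for p using finTs by (simp add: E_def)
  have lk: "Poly_Mapping.lookup (mon p) = (\<lambda>c. if c \<in> E p then 1 else 0)" for p
    unfolding mon_def by (rule lookup_Abs_poly_mapping) (use finE in simp)
  have keysm: "Poly_Mapping.keys (mon p) = E p" for p by (auto simp: in_keys_iff lk split: if_splits)
  have Ecells: "E p \<subseteq> cells n d" for p
  proof
    fix c assume "c \<in> E p"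
    then obtain T where c: "c = cellOf T" unfolding E_def by blast
    have "\<forall>i\<in>{1..n}. (if i \<in> T then 2 else 1::nat) \<in> {1..d i}"
    proof
      fix i assume "i \<in> {1..n}"
      then have "2 \<le> d i" using dd by blast
      then show "(if i \<in> T then 2 else 1::nat) \<in> {1..d i}" by simp
    qed
    then show "c \<in> cells n d" unfolding c cells_def cellOf_def restrict_PiE_iff .
  qed
  have cardE: "card (E p) = card (Ts p)" for p
    unfolding E_def by (rule card_image) (rule inj_on_subset[OF inj TsP])
  have degm: "monom_deg (mon p) = card (Ts p)" for p
    unfolding monom_deg_def keysm lk cardE[symmetric] by simp
  have mr: "model_row n d F \<alpha> (mon p) = card {T. T \<subseteq> \<sigma> \<and> even (card T) = p \<and> restrict (cellOf T) F = \<alpha>}"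
    for F \<alpha> p
  proof -
    have fin1: "finite {c\<in>cells n d. restrict c F = \<alpha>}"
      by (rule finite_subset[of _ "cells n d"]) (auto simp: cells_def intro!: finite_PiE)
    have "model_row n d F \<alpha> (mon p) = (\<Sum>c\<in>{c\<in>cells n d. restrict c F = \<alpha>}. if c \<in> E p then 1 else 0)"
      unfolding model_row_def lk by simp
    also have "\<dots> = card ({c\<in>cells n d. restrict c F = \<alpha>} \<inter> E p)"
      using fin1 by (simp add: sum.If_cases)
    also have "{c\<in>cells n d. restrict c F = \<alpha>} \<inter> E p = cellOf ` {T. T \<subseteq> \<sigma> \<and> even (card T) = p \<and> restrict (cellOf T) F = \<alpha>}"
      using Ecells[of p] by (auto simp: E_def Ts_def)
    also have "card \<dots> = card {T. T \<subseteq> \<sigma> \<and> even (card T) = p \<and> restrict (cellOf T) F = \<alpha>}"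
      by (rule card_image) (rule inj_on_subset[OF inj], auto)
    finally show ?thesis .
  qed
  have sm: "same_margins n d \<Delta> (mon True) (mon False)"
    unfolding same_margins_def
  proof (intro ballI)
    fix F \<alpha> assume F: "F \<in> facets \<Delta>" and \<alpha>: "\<alpha> \<in> PiE F (\<lambda>i. {1..d i})"
    have F\<Delta>: "F \<in> \<Delta>" using F by (simp add: facets_def)
    have Fn: "F \<subseteq> {1..n}" using F\<Delta> sc by (auto simp: simplicial_complex_def)
    have "\<not> \<sigma> \<subseteq> F" using F\<Delta> nf sc by (auto simp: simplicial_complex_def)
    then obtain j where j: "j \<in> \<sigma>" "j \<notin> F" by blast
    have P: "(restrict (cellOf (flip j T)) F = \<alpha>) = (restrict (cellOf T) F = \<alpha>)" for T
    proof -
      have "restrict (cellOf (flip j T)) F = restrict (cellOf T) F"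
        using Fn j(2) by (auto simp: cellOf_def flip_def restrict_def fun_eq_iff)
      then show ?thesis by simp
    qed
    have "card {T. T \<subseteq> \<sigma> \<and> even (card T) \<and> restrict (cellOf T) F = \<alpha>}
        = card {T. T \<subseteq> \<sigma> \<and> odd (card T) \<and> restrict (cellOf T) F = \<alpha>}"
      by (rule flip_card[OF fin\<sigma> j(1)]) (rule P)
    then show "model_row n d F \<alpha> (mon True) = model_row n d F \<alpha> (mon False)"
      unfolding mr by simp
  qed
  have neq: "mon True \<noteq> mon False"
  proof
    assume "mon True = mon False"
    then have "E True = E False" using keysm by metis
    moreover have "cellOf {} \<in> E True" by (auto simp: E_def Ts_def)
    ultimately have "cellOf {} \<in> E False" by simp
    then obtain T where T: "T \<in> Ts False" "cellOf {} = cellOf T" by (auto simp: E_def)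
    have "T \<in> Pow \<sigma>" using T(1) TsP by blast
    then have "T = {}" using inj_onD[OF inj T(2)] by simp
    then show False using T by (simp add: Ts_def)
  qed
  have dT: "card (Ts True) = 2^(card \<sigma> - 1)"
    unfolding Ts_def using even_subsets_card[OF fin\<sigma> ne] by simp
  have "card (Ts True) = card (Ts False)"
  proof -
    obtain j where j: "j \<in> \<sigma>" using ne by blast
    show ?thesis unfolding Ts_def using flip_card[OF fin\<sigma> j, of "\<lambda>_. True"] by simp
  qed
  then have dF: "card (Ts False) = 2^(card \<sigma> - 1)" using dT by simp
  show ?thesis
    by (rule exI[of _ "mon True"], rule exI[of _ "mon False"])
       (use keysm Ecells sm neq degm dT dF in auto)
qed


lemma lookup_ms:
  assumes "finite \<sigma>"
  shows "Poly_Mapping.lookup (\<Sum>i\<in>\<sigma>. Poly_Mapping.single i (1::nat)) j = (if j \<in> \<sigma> then 1 else 0)"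
  using assms by (simp add: lookup_sum lookup_single when_def)

lemma deg_ms:
  assumes "finite \<sigma>"
  shows "monom_deg (\<Sum>i\<in>\<sigma>. Poly_Mapping.single i (1::nat)) = card \<sigma>"
proof -
  have k: "Poly_Mapping.keys (\<Sum>i\<in>\<sigma>. Poly_Mapping.single i (1::nat)) \<subseteq> \<sigma>"
    using lookup_ms[OF assms] by (auto simp: in_keys_iff split: if_splits)
  show ?thesis unfolding monom_deg_eq[OF assms k] using lookup_ms[OF assms] by simp
qed

theorem proposition4p2:
  fixes n :: nat and \<Delta> :: "nat set set" and d :: "nat \<Rightarrow> nat"
  assumes "simplicial_complex n \<Delta>"
    and "sr_ideal n \<Delta> \<noteq> {0 :: (nat, 'k::field) mpoly}"
    and "\<forall>i\<in>{1..n}. 2 \<le> d i"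
  shows "initial_degree (hier_ideal n d \<Delta> :: (nat \<Rightarrow> nat, 'k) mpoly set)
           = 2 ^ (initial_degree (sr_ideal n \<Delta> :: (nat, 'k) mpoly set) - 1)"
proof -
  note sc = assms(1)
  define ms where "ms \<sigma> = (\<Sum>i\<in>\<sigma>. Poly_Mapping.single i (1::nat))" for \<sigma> :: "nat set"
  define Gs where "Gs = {Poly_Mapping.single (ms \<sigma>) (1::'k) | \<sigma>. \<sigma> \<subseteq> {1..n} \<and> \<sigma> \<notin> \<Delta>}"
  have srdef: "(sr_ideal n \<Delta> :: (nat, 'k) mpoly set) = ideal_gen {1..n} Gs"
    by (simp add: sr_ideal_def Gs_def ms_def)
  have ex: "\<exists>\<sigma>. \<sigma> \<subseteq> {1..n} \<and> \<sigma> \<notin> \<Delta>"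
  proof (rule ccontr)
    assume "\<not> ?thesis"
    then have "Gs = {}" by (auto simp: Gs_def)
    then have "(sr_ideal n \<Delta> :: (nat, 'k) mpoly set) \<subseteq> {0}" using ideal_gen_empty srdef by auto
    moreover have "(0 :: (nat, 'k) mpoly) \<in> sr_ideal n \<Delta>" unfolding srdef by (rule ideal_gen.zero)
    ultimately show False using assms(2) by blast
  qed
  obtain \<sigma>0 where \<sigma>0: "\<sigma>0 \<subseteq> {1..n} \<and> \<sigma>0 \<notin> \<Delta>"
    and mn: "\<And>\<sigma>. \<sigma> \<subseteq> {1..n} \<and> \<sigma> \<notin> \<Delta> \<Longrightarrow> card \<sigma>0 \<le> card \<sigma>"
    using ex_has_least_nat[of "\<lambda>\<sigma>. \<sigma> \<subseteq> {1..n} \<and> \<sigma> \<notin> \<Delta>" _ card] ex by metis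
  define s where "s = card \<sigma>0"
  have emp: "{} \<in> \<Delta>" using sc unfolding simplicial_complex_def by blast
  have ne: "\<sigma>0 \<noteq> {}" using \<sigma>0 emp by auto
  have fin0: "finite \<sigma>0" using \<sigma>0 finite_subset by blast
  have s1: "1 \<le> s" unfolding s_def using ne fin0 by (simp add: Suc_le_eq card_gt_0_iff)
  have faces: "\<forall>S. S \<subseteq> {1..n} \<longrightarrow> card S < s \<longrightarrow> S \<in> \<Delta>"
    using mn unfolding s_def by (meson not_le)
  have srdeg: "initial_degree (sr_ideal n \<Delta> :: (nat, 'k) mpoly set) = s"
    unfolding srdef
  proof (rule initdeg_eq)
    show "Poly_Mapping.single (ms \<sigma>0) 1 \<in> ideal_gen {1..n} Gs"
      by (rule gen_in_ideal) (use \<sigma>0 in \<open>auto simp: Gs_def\<close>)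
    show "Poly_Mapping.single (ms \<sigma>0) (1::'k) \<noteq> 0"
    proof
      assume "Poly_Mapping.single (ms \<sigma>0) (1::'k) = 0"
      then have "Poly_Mapping.keys (Poly_Mapping.single (ms \<sigma>0) (1::'k)) = {}" by simp
      then show False by simp
    qed
    show "homogeneous_of_deg (Poly_Mapping.single (ms \<sigma>0) (1::'k)) s"
      unfolding homogeneous_of_deg_def s_def ms_def using deg_ms[OF fin0] by simp
    show "\<forall>f\<in>ideal_gen {1..n} Gs. \<forall>m\<in>Poly_Mapping.keys f. s \<le> monom_deg m"
    proof (intro ballI)
      fix f m assume f: "f \<in> ideal_gen {1..n} Gs" and m: "m \<in> Poly_Mapping.keys f"
      have "\<forall>g\<in>Gs. \<forall>m\<in>Poly_Mapping.keys g. s \<le> monom_deg m"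
      proof (intro ballI)
        fix g m assume g: "g \<in> Gs" and m: "m \<in> Poly_Mapping.keys g"
        then obtain \<sigma> where \<sigma>: "\<sigma> \<subseteq> {1..n}" "\<sigma> \<notin> \<Delta>" "g = Poly_Mapping.single (ms \<sigma>) 1"
          by (auto simp: Gs_def)
        have f\<sigma>: "finite \<sigma>" using \<sigma>(1) finite_subset by blast
        have "m = ms \<sigma>" using m \<sigma>(3) by simp
        moreover have "monom_deg (ms \<sigma>) = card \<sigma>" unfolding ms_def by (rule deg_ms[OF f\<sigma>])
        moreover have "card \<sigma>0 \<le> card \<sigma>" using mn[of \<sigma>] \<sigma>(1,2) by blast
        ultimately show "s \<le> monom_deg m" unfolding s_def by simp
      qed
      then show "s \<le> monom_deg m" using ideal_lower f m by blast
    qed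
  qed
  obtain u v where uv: "Poly_Mapping.keys u \<subseteq> cells n d" "Poly_Mapping.keys v \<subseteq> cells n d"
     "same_margins n d \<Delta> u v" "u \<noteq> v" "monom_deg u = 2^(s - 1)" "monom_deg v = 2^(s - 1)"
    using upper_comb[OF sc conjunct1[OF \<sigma>0] conjunct2[OF \<sigma>0] ne assms(3)] unfolding s_def by blast
  define Gh where "Gh = {Poly_Mapping.single u 1 - Poly_Mapping.single v (1::'k) | u v.
        Poly_Mapping.keys u \<subseteq> cells n d \<and> Poly_Mapping.keys v \<subseteq> cells n d \<and> same_margins n d \<Delta> u v}"
  have hdef: "(hier_ideal n d \<Delta> :: (nat \<Rightarrow> nat, 'k) mpoly set) = ideal_gen (cells n d) Gh"
    by (simp add: hier_ideal_def Gh_def)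
  have hdeg: "initial_degree (hier_ideal n d \<Delta> :: (nat \<Rightarrow> nat, 'k) mpoly set) = 2^(s-1)"
    unfolding hdef
  proof (rule initdeg_eq)
    show "Poly_Mapping.single u 1 - Poly_Mapping.single v 1 \<in> ideal_gen (cells n d) Gh"
      by (rule gen_in_ideal) (use uv in \<open>auto simp: Gh_def\<close>)
    show "Poly_Mapping.single u 1 - Poly_Mapping.single v (1::'k) \<noteq> 0"
    proof
      assume "Poly_Mapping.single u 1 - Poly_Mapping.single v (1::'k) = 0"
      then have "Poly_Mapping.lookup (Poly_Mapping.single u 1 - Poly_Mapping.single v (1::'k)) u = 0" by simp
      then show False using uv(4) by (simp add: lookup_minus lookup_single when_def)
    qed
    show "homogeneous_of_deg (Poly_Mapping.single u 1 - Poly_Mapping.single v (1::'k)) (2^(s-1))"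
      unfolding homogeneous_of_deg_def
    proof
      fix m assume "m \<in> Poly_Mapping.keys (Poly_Mapping.single u 1 - Poly_Mapping.single v (1::'k))"
      then have "m = u \<or> m = v" using keys_diff by fastforce
      then show "monom_deg m = 2^(s-1)" using uv by auto
    qed
    show "\<forall>f\<in>ideal_gen (cells n d) Gh. \<forall>m\<in>Poly_Mapping.keys f. 2^(s-1) \<le> monom_deg m"
    proof (intro ballI)
      fix f m assume f: "f \<in> ideal_gen (cells n d) Gh" and m: "m \<in> Poly_Mapping.keys f"
      have "\<forall>g\<in>Gh. \<forall>m\<in>Poly_Mapping.keys g. 2^(s-1) \<le> monom_deg m"
      proof (intro ballI)
        fix g m assume g: "g \<in> Gh" and m: "m \<in> Poly_Mapping.keys g"
        then obtain a b where ab: "Poly_Mapping.keys a \<subseteq> cells n d" "Poly_Mapping.keys b \<subseteq> cells n d"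
          "same_margins n d \<Delta> a b" "g = Poly_Mapping.single a 1 - Poly_Mapping.single b 1"
          by (auto simp: Gh_def)
        show "2^(s-1) \<le> monom_deg m"
        proof (cases "a = b")
          case True then show ?thesis using m ab by simp
        next
          case False
          have ba: "same_margins n d \<Delta> b a" using ab(3) unfolding same_margins_def by metis
          have "2^(s-1) \<le> monom_deg a" by (rule lower_comb[OF sc faces s1 ab(1,2,3) False])
          moreover have "2^(s-1) \<le> monom_deg b"
            by (rule lower_comb[OF sc faces s1 ab(2,1) ba]) (use False in auto)
          moreover have "m = a \<or> m = b" using m ab(4) keys_diff by fastforce
          ultimately show ?thesis by auto
        qed
      qed
      then show "2^(s-1) \<le> monom_deg m" using ideal_lower f m by blast
    qed
  qed
  show ?thesis using srdeg hdeg by simp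
qed

end
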